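(* Let $\mathcal{K}$ be a continuous unitary representation of $\overline{\mathfrak{S}}_\infty$ in a Hilbert space $\mathcal{H}$, let $n\ge 0$ and $k\ge 1$ be integers, let $P_n$ be the weak-operator limit of $\mathcal{K}({}^n\sigma_m)$ as $m\to\infty$, and let $O_k$ be the weak-operator limit of $\mathcal{K}((k\;\;N))$ as $N\to\infty$. Then $P_nO_k=O_kP_n$.
   Context: $\overline{\mathfrak{S}}_\infty$ is the group of all bijections of $\mathbb{N}$, with the Polish topology in which the subgroups $\mathfrak{S}(n,\infty)=\{s: s(j)=j \text{ for } j=1,\dots,n\}$ form a fundamental system of neighborhoods of the identity; continuity of $\mathcal{K}$ means $\lim_{n\to\infty}\sup_{s\in\mathfrak{S}(n,\infty)}\|\mathcal{K}(s)\eta-\eta\|=0$ for each $\eta\in\mathcal{H}$. $(k\;j)$ denotes the transposition of $k$ and $j$, and ${}^n\sigma_m=(n+1\;\;n+m+1)(n+2\;\;n+m+2)\cdots(n+m\;\;n+2m)$. Both weak-operator limits $P_n$ and $O_k$ exist and are self-adjoint projections. *)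

theory Defs
  imports "HOL-Analysis.Analysis" "HOL-Combinatorics.Transposition"
begin

text \<open>Positive integers 1,2,3,... are the naturals >= 1; the point 0 is an extra
  point which all elements of the group fix, so the group below is exactly the group
  of all bijections of {1,2,...}.\<close>

definition Sinf :: "(nat \<Rightarrow> nat) set" where
  "Sinf = {s. bij s \<and> s 0 = 0}"

definition Sinf_fix :: "nat \<Rightarrow> (nat \<Rightarrow> nat) set" where
  "Sinf_fix n = {s \<in> Sinf. \<forall>j\<in>{1..n}. s j = j}"

definition sigma :: "nat \<Rightarrow> nat \<Rightarrow> nat \<Rightarrow> nat" where
  "sigma n m = fold (\<lambda>i f. f \<circ> Transposition.transpose (n + i) (n + m + i)) [1..<m+1] id"

text \<open>A complex Hilbert space is modelled as a real Hilbert space (real part of the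
  complex inner product) together with the multiplication-by-i operator J.\<close>
definition complex_structure :: "('a::real_inner \<Rightarrow> 'a) \<Rightarrow> bool" where
  "complex_structure J \<longleftrightarrow> linear J \<and> (\<forall>x. J (J x) = - x) \<and>
     (\<forall>x y. inner (J x) (J y) = inner x y)"

definition unitary_op :: "('a::real_inner \<Rightarrow> 'a) \<Rightarrow> ('a \<Rightarrow> 'a) \<Rightarrow> bool" where
  "unitary_op J U \<longleftrightarrow> linear U \<and> (\<forall>x. U (J x) = J (U x)) \<and> surj U \<and>
     (\<forall>x y. inner (U x) (U y) = inner x y)"

definition continuous_unitary_rep ::
  "('a::real_inner \<Rightarrow> 'a) \<Rightarrow> ((nat \<Rightarrow> nat) \<Rightarrow> 'a \<Rightarrow> 'a) \<Rightarrow> bool" where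
  "continuous_unitary_rep J K \<longleftrightarrow>
     (\<forall>s\<in>Sinf. unitary_op J (K s)) \<and>
     (\<forall>s\<in>Sinf. \<forall>t\<in>Sinf. K (s \<circ> t) = K s \<circ> K t) \<and>
     (\<forall>\<eta>. (\<lambda>n. SUP s\<in>Sinf_fix n. norm (K s \<eta> - \<eta>)) \<longlonglongrightarrow> 0)"

text \<open>P is the weak-operator limit of the sequence of operators A m. (Convergence of the
  real parts of all complex inner products is equivalent to weak convergence, since the
  imaginary part of <u,v> is the real part of <u, J v> up to sign.)\<close>
definition wot_limit :: "(nat \<Rightarrow> 'a::real_inner \<Rightarrow> 'a) \<Rightarrow> ('a \<Rightarrow> 'a) \<Rightarrow> bool" where
  "wot_limit A P \<longleftrightarrow> (\<forall>x y. (\<lambda>m. inner (A m x) y) \<longlonglongrightarrow> inner (P x) y)"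

end

theory Submission
  imports Defs
begin

lemma fold_closed:
  assumes "j \<le> m"
  shows "fold (\<lambda>i f. f \<circ> Transposition.transpose (n + i) (n + m + i)) [1..<j+1] id x =
    (if n < x \<and> x \<le> n + j then x + m else if n + m < x \<and> x \<le> n + m + j then x - m else x)"
  using assms
proof (induction j arbitrary: x)
  case 0
  then show ?case by simp
next
  case (Suc j)
  have "[1..<Suc j + 1] = [1..<j+1] @ [Suc j]" by simp
  then have "fold (\<lambda>i f. f \<circ> Transposition.transpose (n + i) (n + m + i)) [1..<Suc j+1] id x =
     fold (\<lambda>i f. f \<circ> Transposition.transpose (n + i) (n + m + i)) [1..<j+1] id
       (Transposition.transpose (n + Suc j) (n + m + Suc j) x)"
    by simp
  also have "\<dots> = (if n < x \<and> x \<le> n + Suc j then x + m else if n + m < x \<and> x \<le> n + m + Suc j then x - m else x)"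
    apply (subst Suc.IH)
    using Suc.prems apply simp
    using Suc.prems by (auto simp: Transposition.transpose_def)
  finally show ?case .
qed

lemma sigma_closed:
  "sigma n m x = (if n < x \<and> x \<le> n + m then x + m else if n + m < x \<and> x \<le> n + 2*m then x - m else x)"
  unfolding sigma_def using fold_closed[of m m n x] by simp

lemma sigma_invol: "sigma n m \<circ> sigma n m = id"
  by (auto simp: fun_eq_iff sigma_closed)

lemma sigma_Sinf: "sigma n m \<in> Sinf"
  unfolding Sinf_def using sigma_invol by (auto intro!: o_bij simp: sigma_closed)

lemma transpose_Sinf: "a \<ge> 1 \<Longrightarrow> b \<ge> 1 \<Longrightarrow> Transposition.transpose a b \<in> Sinf"
  unfolding Sinf_def by (auto simp: Transposition.transpose_def)

lemma transpose_fix: "a \<ge> 1 \<Longrightarrow> a < b \<Longrightarrow> Transposition.transpose a b \<in> Sinf_fix (a - 1)"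
  unfolding Sinf_fix_def using transpose_Sinf[of a b] by (auto simp: Transposition.transpose_def)

lemma comm_small: "k \<le> n \<Longrightarrow> N > n + 2*m \<Longrightarrow>
   sigma n m \<circ> Transposition.transpose k N = Transposition.transpose k N \<circ> sigma n m"
  by (auto simp: fun_eq_iff sigma_closed Transposition.transpose_def)

lemma conj_big: "n < a \<Longrightarrow> a < b \<Longrightarrow> b \<le> n + m \<Longrightarrow>
   Transposition.transpose a b \<circ> sigma n m = sigma n m \<circ> Transposition.transpose (a+m) (b+m)"
  by (auto simp: fun_eq_iff sigma_closed Transposition.transpose_def)

lemma inner_ext:
  fixes u v :: "'a::real_inner"
  assumes "\<And>z. inner u z = inner v z" shows "u = v"
proof -
  have "inner (u - v) (u - v) = 0" using assms[of "u - v"] by (simp add: inner_diff_left)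
  then show ?thesis by simp
qed

lemma rep_comp: "continuous_unitary_rep J K \<Longrightarrow> s \<in> Sinf \<Longrightarrow> t \<in> Sinf \<Longrightarrow> K (s \<circ> t) = K s \<circ> K t"
  unfolding continuous_unitary_rep_def by blast

lemma rep_inner: "continuous_unitary_rep J K \<Longrightarrow> s \<in> Sinf \<Longrightarrow> inner (K s x) (K s y) = inner x y"
  unfolding continuous_unitary_rep_def unitary_op_def by blast

lemma rep_norm:
  fixes K :: "(nat \<Rightarrow> nat) \<Rightarrow> 'a::real_inner \<Rightarrow> 'a"
  shows "continuous_unitary_rep J K \<Longrightarrow> s \<in> Sinf \<Longrightarrow> norm (K s x) = norm x"
  using rep_inner[of J K s x x] by (simp add: norm_eq_sqrt_inner)

lemma id_Sinf: "id \<in> Sinf" unfolding Sinf_def by simp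

lemma rep_id:
  assumes "continuous_unitary_rep J K" shows "K id = id"
proof -
  have su: "surj (K id)" using assms id_Sinf unfolding continuous_unitary_rep_def unitary_op_def by blast
  have c: "K id = K id \<circ> K id" using rep_comp[OF assms id_Sinf id_Sinf] by simp
  show ?thesis
  proof
    fix x
    obtain w where "x = K id w" using su by (metis surjD)
    then show "K id x = id x" using c by (metis comp_apply id_apply)
  qed
qed

lemma rep_selfadj:
  assumes "continuous_unitary_rep J K" "s \<in> Sinf" "s \<circ> s = id"
  shows "inner (K s x) y = inner x (K s y)"
proof -
  have "K s (K s y) = y" using rep_comp[OF assms(1) assms(2) assms(2)] assms(3) rep_id[OF assms(1)]
    by (metis comp_apply id_apply)
  then have "inner (K s x) y = inner (K s x) (K s (K s y))" by simp
  also have "\<dots> = inner x (K s y)" using rep_inner[OF assms(1,2)] by simp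
  finally show ?thesis .
qed

lemma wot_selfadj:
  assumes "wot_limit A P" "eventually (\<lambda>m. \<forall>x y. inner (A m x) y = inner x (A m y)) sequentially"
  shows "inner (P x) y = inner x (P y)"
proof -
  have 1: "(\<lambda>m. inner (A m x) y) \<longlonglongrightarrow> inner (P x) y" using assms(1) unfolding wot_limit_def by blast
  have "(\<lambda>m. inner (A m y) x) \<longlonglongrightarrow> inner (P y) x" using assms(1) unfolding wot_limit_def by blast
  then have "(\<lambda>m. inner x (A m y)) \<longlonglongrightarrow> inner x (P y)" by (simp add: inner_commute)
  then have "(\<lambda>m. inner (A m x) y) \<longlonglongrightarrow> inner x (P y)"
    by (rule iffD2[OF tendsto_cong, rotated]) (use assms(2) in \<open>auto elim: eventually_mono\<close>)
  with 1 show ?thesis using LIMSEQ_unique by blast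
qed

lemma sigma_selfadj: "continuous_unitary_rep J K \<Longrightarrow> inner (K (sigma n m) x) y = inner x (K (sigma n m) y)"
  using rep_selfadj sigma_Sinf sigma_invol by blast

lemma transp_selfadj: "continuous_unitary_rep J K \<Longrightarrow> a \<ge> 1 \<Longrightarrow> b \<ge> 1 \<Longrightarrow>
   inner (K (Transposition.transpose a b) x) y = inner x (K (Transposition.transpose a b) y)"
  using rep_selfadj transpose_Sinf by (metis transpose_comp_involutory)

lemma cont_bound:
  fixes K :: "(nat \<Rightarrow> nat) \<Rightarrow> 'a::real_inner \<Rightarrow> 'a"
  assumes "continuous_unitary_rep J K" "s \<in> Sinf_fix j"
  shows "norm (K s y - y) \<le> (SUP s\<in>Sinf_fix j. norm (K s y - y))"
proof (rule cSUP_upper[OF assms(2)])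
  show "bdd_above ((\<lambda>s. norm (K s y - y)) ` Sinf_fix j)"
  proof (rule bdd_aboveI2)
    fix s assume "s \<in> Sinf_fix j"
    then have "s \<in> Sinf" unfolding Sinf_fix_def by simp
    then show "norm (K s y - y) \<le> 2 * norm y"
      using norm_triangle_ineq4[of "K s y" y] rep_norm[OF assms(1)] by simp
  qed
qed

lemma invariance:
  fixes K :: "(nat \<Rightarrow> nat) \<Rightarrow> 'a::real_inner \<Rightarrow> 'a"
  assumes rep: "continuous_unitary_rep J K" and P: "wot_limit (\<lambda>m. K (sigma n m)) Pn"
    and ab: "n < a" "a < b"
  shows "K (Transposition.transpose a b) (Pn y) = Pn y"
proof (rule inner_ext)
  fix z
  let ?t = "Transposition.transpose a b"
  let ?t' = "\<lambda>m. Transposition.transpose (a+m) (b+m)"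
  let ?S = "\<lambda>j. SUP s\<in>Sinf_fix j. norm (K s y - y)"
  have S0: "?S \<longlonglongrightarrow> 0" using rep unfolding continuous_unitary_rep_def by blast
  then have S0': "(\<lambda>m. ?S (m + (a - 1))) \<longlonglongrightarrow> 0" by (rule LIMSEQ_ignore_initial_segment)
  have tS: "?t \<in> Sinf" using ab by (intro transpose_Sinf) auto
  have l1: "inner (K ?t (Pn y)) z = inner (Pn y) (K ?t z)"
    using transp_selfadj[OF rep, of a b] ab by auto
  have l2: "(\<lambda>m. inner (K (sigma n m) y) (K ?t z)) \<longlonglongrightarrow> inner (Pn y) (K ?t z)"
    using P unfolding wot_limit_def by blast
  have ev: "eventually (\<lambda>m. inner (K (sigma n m) y) (K ?t z) = inner (K (sigma n m) (K (?t' m) y)) z) sequentially"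
  proof (rule eventually_sequentiallyI[of "b - n"])
    fix m assume m: "b - n \<le> m"
    have t'S: "?t' m \<in> Sinf" using ab by (intro transpose_Sinf) auto
    have "inner (K (sigma n m) y) (K ?t z) = inner (K ?t (K (sigma n m) y)) z"
      using transp_selfadj[OF rep, of a b] ab by auto
    also have "K ?t (K (sigma n m) y) = K (?t \<circ> sigma n m) y"
      using rep_comp[OF rep tS sigma_Sinf] by simp
    also have "?t \<circ> sigma n m = sigma n m \<circ> ?t' m" using conj_big[of n a b m] ab m by simp
    also have "K (sigma n m \<circ> ?t' m) y = K (sigma n m) (K (?t' m) y)"
      using rep_comp[OF rep sigma_Sinf t'S] by simp
    finally show "inner (K (sigma n m) y) (K ?t z) = inner (K (sigma n m) (K (?t' m) y)) z" .
  qed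
  have bound: "\<bar>inner (K (sigma n m) (K (?t' m) y)) z - inner (K (sigma n m) y) z\<bar> \<le> ?S (m + (a - 1)) * norm z" for m
  proof -
    have "inner (K (sigma n m) (K (?t' m) y)) z - inner (K (sigma n m) y) z
        = inner (K (?t' m) y - y) (K (sigma n m) z)"
      using sigma_selfadj[OF rep] by (simp add: inner_diff_left)
    then have "\<bar>inner (K (sigma n m) (K (?t' m) y)) z - inner (K (sigma n m) y) z\<bar>
        \<le> norm (K (?t' m) y - y) * norm (K (sigma n m) z)"
      using Cauchy_Schwarz_ineq2 by metis
    also have "norm (K (sigma n m) z) = norm z" using rep_norm[OF rep sigma_Sinf] by simp
    also have "norm (K (?t' m) y - y) \<le> ?S (m + (a - 1))"
    proof -
      have "?t' m \<in> Sinf_fix (a + m - 1)" using ab by (intro transpose_fix) auto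
      moreover have "a + m - 1 = m + (a - 1)" using ab by simp
      ultimately show ?thesis using cont_bound[OF rep] by metis
    qed
    finally show ?thesis by (simp add: mult_right_mono)
  qed
  have diff0: "(\<lambda>m. inner (K (sigma n m) (K (?t' m) y)) z - inner (K (sigma n m) y) z) \<longlonglongrightarrow> 0"
  proof (rule Lim_null_comparison[OF _ ])
    show "\<forall>\<^sub>F m in sequentially. norm (inner (K (sigma n m) (K (?t' m) y)) z - inner (K (sigma n m) y) z) \<le> ?S (m + (a - 1)) * norm z"
      using bound by simp
    show "(\<lambda>m. ?S (m + (a - 1)) * norm z) \<longlonglongrightarrow> 0"
      using tendsto_mult_left_zero[OF S0'] by simp
  qed
  have l3: "(\<lambda>m. inner (K (sigma n m) y) z) \<longlonglongrightarrow> inner (Pn y) z"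
    using P unfolding wot_limit_def by blast
  have "(\<lambda>m. inner (K (sigma n m) (K (?t' m) y)) z) \<longlonglongrightarrow> inner (Pn y) z"
    using tendsto_add[OF diff0 l3] by simp
  then have "(\<lambda>m. inner (K (sigma n m) y) (K ?t z)) \<longlonglongrightarrow> inner (Pn y) z"
    using tendsto_cong[OF ev] by blast
  with l2 have "inner (Pn y) (K ?t z) = inner (Pn y) z" using LIMSEQ_unique by blast
  with l1 show "inner (K ?t (Pn y)) z = inner (Pn y) z" by simp
qed

theorem lemma5:
  fixes J :: "'a::{real_inner, complete_space} \<Rightarrow> 'a"
    and K :: "(nat \<Rightarrow> nat) \<Rightarrow> 'a \<Rightarrow> 'a"
    and Pn Ok :: "'a \<Rightarrow> 'a"
    and n k :: nat
  assumes "complex_structure J"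
    and "continuous_unitary_rep J K"
    and "k \<ge> 1"
    and "wot_limit (\<lambda>m. K (sigma n m)) Pn"
    and "wot_limit (\<lambda>N. K (Transposition.transpose k N)) Ok"
  shows "Pn \<circ> Ok = Ok \<circ> Pn"
proof -
  note rep = assms(2) and P = assms(4) and O = assms(5)
  have Psa: "inner (Pn x) y = inner x (Pn y)" for x y
    by (rule wot_selfadj[OF P]) (use sigma_selfadj[OF rep] in auto)
  have Osa: "inner (Ok x) y = inner x (Ok y)" for x y
  proof (rule wot_selfadj[OF O])
    show "\<forall>\<^sub>F m in sequentially. \<forall>x y. inner (K (Transposition.transpose k m) x) y =
            inner x (K (Transposition.transpose k m) y)"
      by (rule eventually_sequentiallyI[of 1]) (use transp_selfadj[OF rep] assms(3) in auto)
  qed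
  show ?thesis
  proof (cases "k \<le> n")
    case True
    have comm: "Ok (K (sigma n m) x) = K (sigma n m) (Ok x)" for m x
    proof (rule inner_ext)
      fix y
      have ev: "eventually (\<lambda>N. inner (K (Transposition.transpose k N) (K (sigma n m) x)) y
                 = inner (K (Transposition.transpose k N) x) (K (sigma n m) y)) sequentially"
      proof (rule eventually_sequentiallyI[of "Suc (n + 2*m)"])
        fix N assume N: "Suc (n + 2*m) \<le> N"
        have tS: "Transposition.transpose k N \<in> Sinf" using N assms(3) by (intro transpose_Sinf) auto
        have "K (Transposition.transpose k N) (K (sigma n m) x) = K (Transposition.transpose k N \<circ> sigma n m) x"
          using rep_comp[OF rep tS sigma_Sinf] by simp
        also have "Transposition.transpose k N \<circ> sigma n m = sigma n m \<circ> Transposition.transpose k N"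
          using comm_small[of k n m N] True N by simp
        also have "K (sigma n m \<circ> Transposition.transpose k N) x = K (sigma n m) (K (Transposition.transpose k N) x)"
          using rep_comp[OF rep sigma_Sinf tS] by simp
        finally show "inner (K (Transposition.transpose k N) (K (sigma n m) x)) y
                 = inner (K (Transposition.transpose k N) x) (K (sigma n m) y)"
          using sigma_selfadj[OF rep] by simp
      qed
      have "(\<lambda>N. inner (K (Transposition.transpose k N) (K (sigma n m) x)) y) \<longlonglongrightarrow> inner (Ok (K (sigma n m) x)) y"
        using O unfolding wot_limit_def by blast
      moreover have "(\<lambda>N. inner (K (Transposition.transpose k N) x) (K (sigma n m) y)) \<longlonglongrightarrow> inner (Ok x) (K (sigma n m) y)"
        using O unfolding wot_limit_def by blast
      ultimately have "inner (Ok (K (sigma n m) x)) y = inner (Ok x) (K (sigma n m) y)"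
        using tendsto_cong[OF ev] LIMSEQ_unique by blast
      then show "inner (Ok (K (sigma n m) x)) y = inner (K (sigma n m) (Ok x)) y"
        using sigma_selfadj[OF rep] by simp
    qed
    show ?thesis
    proof
      fix x
      show "(Pn \<circ> Ok) x = (Ok \<circ> Pn) x"
      proof (rule inner_ext)
        fix y
        have "(\<lambda>m. inner (K (sigma n m) (Ok x)) y) \<longlonglongrightarrow> inner (Pn (Ok x)) y"
          using P unfolding wot_limit_def by blast
        moreover have "(\<lambda>m. inner (K (sigma n m) x) (Ok y)) \<longlonglongrightarrow> inner (Pn x) (Ok y)"
          using P unfolding wot_limit_def by blast
        moreover have "inner (K (sigma n m) (Ok x)) y = inner (K (sigma n m) x) (Ok y)" for m
          unfolding comm[of m x, symmetric] by (rule Osa)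
        ultimately have "inner (Pn (Ok x)) y = inner (Pn x) (Ok y)" using LIMSEQ_unique by simp
        then show "inner ((Pn \<circ> Ok) x) y = inner ((Ok \<circ> Pn) x) y" using Osa[of "Pn x" y] by simp
      qed
    qed
  next
    case False
    have OP: "Ok (Pn y) = Pn y" for y
    proof (rule inner_ext)
      fix z
      have lim: "(\<lambda>N. inner (K (Transposition.transpose k N) (Pn y)) z) \<longlonglongrightarrow> inner (Ok (Pn y)) z"
        using O unfolding wot_limit_def by blast
      have ev: "eventually (\<lambda>N. inner (K (Transposition.transpose k N) (Pn y)) z = inner (Pn y) z) sequentially"
      proof (rule eventually_sequentiallyI[of "Suc k"])
        fix N assume "Suc k \<le> N"
        then show "inner (K (Transposition.transpose k N) (Pn y)) z = inner (Pn y) z"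
          using invariance[OF rep P, of k N] False by simp
      qed
      have cl: "(\<lambda>N. inner (Pn y) z) \<longlonglongrightarrow> inner (Ok (Pn y)) z"
        using tendsto_cong[OF ev, THEN iffD1, OF lim] .
      show "inner (Ok (Pn y)) z = inner (Pn y) z" using LIMSEQ_unique[OF cl tendsto_const] .
    qed
    show ?thesis
    proof
      fix x
      show "(Pn \<circ> Ok) x = (Ok \<circ> Pn) x"
      proof (rule inner_ext)
        fix z
        have "inner (Pn (Ok x)) z = inner (Ok x) (Pn z)" by (rule Psa)
        also have "\<dots> = inner x (Ok (Pn z))" by (rule Osa)
        also have "\<dots> = inner x (Pn z)" by (simp only: OP)
        also have "\<dots> = inner (Pn x) z" by (rule Psa[symmetric])
        also have "\<dots> = inner (Ok (Pn x)) z" by (simp only: OP)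
        finally show "inner ((Pn \<circ> Ok) x) z = inner ((Ok \<circ> Pn) x) z" by simp
      qed
    qed
  qed
qed

end
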